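(* The only pair of integers $(x,y)$ satisfying \[\frac{2x+y}{\sqrt{3y^2-4y+2}}=\frac{-x-2y}{\sqrt{3x^2-4x+2}}\] is $x=y=0$.
   Context: Square roots denote positive square roots (the radicands are positive for all integers $x,y$). *)

theory Defs
  imports Complex_Main
begin

end

theory Submission
  imports Defs
begin

lemma int_part:
  fixes x y :: int
  assumes "(2*x+y)^2*(3*x^2-4*x+2) = (x+2*y)^2*(3*y^2-4*y+2)"
  shows "x = y \<or> (x = 0 \<and> y = 0)"
proof -
  define s where "s = x + y"
  define p where "p = x * y"
  have D: "(x - y) * (12*s^3 - 12*p*s - 16*s^2 + 4*p + 6*s) = 0"
  proof -
    have "(2*x+y)^2*(3*x^2-4*x+2) - (x+2*y)^2*(3*y^2-4*y+2) = (x - y) * (12*s^3 - 12*p*s - 16*s^2 + 4*p + 6*s)"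
      unfolding s_def p_def by algebra
    thus ?thesis using assms by simp
  qed
  show ?thesis
  proof (cases "x = y")
    case False
    hence "12*s^3 - 12*p*s - 16*s^2 + 4*p + 6*s = 0" using D by simp
    hence E: "2*(3*s-1)*p = s*(3*s-1)*(2*s-2) + s" by algebra
    have "(3*s-1) dvd s"
    proof -
      have "s = (3*s-1)*(2*p - s*(2*s-2))" using E by (simp add: algebra_simps)
      thus ?thesis by (metis dvd_triv_left)
    qed
    hence "(3*s-1) dvd (3*s - (3*s-1))" by (meson dvd_diff dvd_mult dvd_refl)
    hence "\<bar>3*s-1\<bar> = 1" by simp
    hence s0: "s = 0" by arith
    hence "p = 0" using E by simp
    hence "x = 0 \<or> y = 0" unfolding p_def by simp
    thus ?thesis using s0 unfolding s_def by auto
  qed simp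
qed

theorem proposition8:
  fixes x y :: int
  shows "(2 * x + y) / sqrt (3 * y^2 - 4 * y + 2) = (- x - 2 * y) / sqrt (3 * x^2 - 4 * x + 2)
         \<longleftrightarrow> (x = 0 \<and> y = 0)"
proof
  assume h: "(2 * x + y) / sqrt (3 * y^2 - 4 * y + 2) = (- x - 2 * y) / sqrt (3 * x^2 - 4 * x + 2)"
  define A :: real where "A = 3 * y^2 - 4 * y + 2"
  define B :: real where "B = 3 * x^2 - 4 * x + 2"
  have "A = 3 * (real_of_int y - 2/3)^2 + 2/3" unfolding A_def by (simp add: power2_eq_square algebra_simps)
  moreover have "(real_of_int y - 2/3)^2 \<ge> 0" by simp
  ultimately have Ap: "A > 0" by linarith
  have "B = 3 * (real_of_int x - 2/3)^2 + 2/3" unfolding B_def by (simp add: power2_eq_square algebra_simps)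
  moreover have "(real_of_int x - 2/3)^2 \<ge> 0" by simp
  ultimately have Bp: "B > 0" by linarith
  have h2: "real_of_int (2*x+y) / sqrt A = real_of_int (-x-2*y) / sqrt B" using h unfolding A_def B_def by simp
  hence "(real_of_int (2*x+y) / sqrt A)^2 = (real_of_int (-x-2*y) / sqrt B)^2" by simp
  hence "real_of_int (2*x+y)^2 / A = real_of_int (-x-2*y)^2 / B"
    using Ap Bp by (simp add: power_divide)
  hence "real_of_int (2*x+y)^2 * B = real_of_int (-x-2*y)^2 * A"
    using Ap Bp by (simp add: field_simps)
  hence "real_of_int ((2*x+y)^2*(3*x^2-4*x+2)) = real_of_int ((x+2*y)^2*(3*y^2-4*y+2))"
    unfolding A_def B_def by (simp add: power2_eq_square algebra_simps)
  hence "(2*x+y)^2*(3*x^2-4*x+2) = (x+2*y)^2*(3*y^2-4*y+2)" using of_int_eq_iff by blast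
  hence c: "x = y \<or> (x = 0 \<and> y = 0)" by (rule int_part)
  show "x = 0 \<and> y = 0"
  proof (cases "x = y")
    case True
    hence "real_of_int (3*x) / sqrt B = - real_of_int (3*x) / sqrt B" using h2 unfolding A_def B_def by simp
    hence "real_of_int (3*x) / sqrt B = 0" by linarith
    hence "x = 0" using Bp by simp
    thus ?thesis using True by simp
  qed (use c in auto)
qed simp

end
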